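(* Let $\beta>0$, $\gamma\in(\frac12,1)$, $c_0=\frac{(2\beta)^{1/\gamma}}{4\gamma}$, $\varkappa=\frac32-\frac1{2\gamma}$, let $\eta>0$ and $U=(0,\eta)$. For $\varepsilon\in U$ put $Z_2(\varepsilon)=\frac1{5\varepsilon^{2/3}}$, and put $Z_2(0)=+\infty$. For $\varepsilon\in U\cup\{0\}$ and $z\in[-Z_2(\varepsilon),-1]$ define $$\widehat T(z,\varepsilon)=\begin{pmatrix}0&T_{12}(z,\varepsilon)\\ T_{21}(z,\varepsilon)&0\end{pmatrix},$$ $$T_{12}(z,\varepsilon)=\int_{-Z_2(\varepsilon)}^z\frac{ds}{4s(1+i\varepsilon^{1/3}\sqrt{-s})}\exp\Big(\int_s^z\frac{2ic_0\sqrt{-\sigma}\,d\sigma}{(1-\varepsilon^{2/3}\sigma)^{\varkappa}}\Big),\quad T_{21}(z,\varepsilon)=\int_{-Z_2(\varepsilon)}^z\frac{ds}{4s(1-i\varepsilon^{1/3}\sqrt{-s})}\exp\Big(-\int_s^z\frac{2ic_0\sqrt{-\sigma}\,d\sigma}{(1-\varepsilon^{2/3}\sigma)^{\varkappa}}\Big).$$ Then there exists $c_{IV}>0$ such that $\|\widehat T(z,\varepsilon)\|<\frac{c_{IV}}{|z|^{3/2}}$ for every $\varepsilon\in U\cup\{0\}$ and $z\in[-Z_2(\varepsilon),-1]$. *)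

theory Defs
  imports "HOL-Analysis.Analysis"
begin

definition c0 :: "real \<Rightarrow> real \<Rightarrow> real" where
  "c0 \<beta> \<gamma> = (2 * \<beta>) powr (1 / \<gamma>) / (4 * \<gamma>)"

definition kappa :: "real \<Rightarrow> real" where
  "kappa \<gamma> = 3/2 - 1 / (2 * \<gamma>)"

text \<open>Z_2(eps) = 1/(5 eps^(2/3)) for eps > 0; Z_2(0) = +infinity is handled by dom_int.\<close>
definition Z2 :: "real \<Rightarrow> real" where
  "Z2 \<epsilon> = 1 / (5 * \<epsilon> powr (2/3))"

definition dom_int :: "real \<Rightarrow> real \<Rightarrow> real set" where
  "dom_int \<epsilon> z = (if \<epsilon> = 0 then {..z} else {- Z2 \<epsilon> .. z})"

definition phase :: "real \<Rightarrow> real \<Rightarrow> real \<Rightarrow> real \<Rightarrow> real \<Rightarrow> real" where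
  "phase \<beta> \<gamma> \<epsilon> s z =
     integral {s..z} (\<lambda>\<sigma>. 2 * c0 \<beta> \<gamma> * sqrt (- \<sigma>) / (1 - \<epsilon> powr (2/3) * \<sigma>) powr kappa \<gamma>)"

definition f12 :: "real \<Rightarrow> real \<Rightarrow> real \<Rightarrow> real \<Rightarrow> real \<Rightarrow> complex" where
  "f12 \<beta> \<gamma> \<epsilon> z s =
     exp (\<i> * complex_of_real (phase \<beta> \<gamma> \<epsilon> s z)) /
     (4 * complex_of_real s * (1 + \<i> * complex_of_real (\<epsilon> powr (1/3) * sqrt (- s))))"

definition f21 :: "real \<Rightarrow> real \<Rightarrow> real \<Rightarrow> real \<Rightarrow> real \<Rightarrow> complex" where
  "f21 \<beta> \<gamma> \<epsilon> z s =
     exp (- (\<i> * complex_of_real (phase \<beta> \<gamma> \<epsilon> s z))) /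
     (4 * complex_of_real s * (1 - \<i> * complex_of_real (\<epsilon> powr (1/3) * sqrt (- s))))"

definition T12 :: "real \<Rightarrow> real \<Rightarrow> real \<Rightarrow> real \<Rightarrow> complex" where
  "T12 \<beta> \<gamma> \<epsilon> z = integral (dom_int \<epsilon> z) (f12 \<beta> \<gamma> \<epsilon> z)"

definition T21 :: "real \<Rightarrow> real \<Rightarrow> real \<Rightarrow> real \<Rightarrow> complex" where
  "T21 \<beta> \<gamma> \<epsilon> z = integral (dom_int \<epsilon> z) (f21 \<beta> \<gamma> \<epsilon> z)"

definition That :: "real \<Rightarrow> real \<Rightarrow> real \<Rightarrow> real \<Rightarrow> complex^2^2" where
  "That \<beta> \<gamma> \<epsilon> z = vector [vector [0, T12 \<beta> \<gamma> \<epsilon> z], vector [T21 \<beta> \<gamma> \<epsilon> z, 0]]"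

end

theory Submission
  imports Defs
begin


definition Af :: "real \<Rightarrow> real \<Rightarrow> real \<Rightarrow> real" where
  "Af k w s = (1 - w * s) powr (k - 1)"
definition Ad :: "real \<Rightarrow> real \<Rightarrow> real \<Rightarrow> real" where
  "Ad k w s = (k - 1) * (1 - w * s) powr (k - 2) * (- w)"
definition GG :: "real \<Rightarrow> real" where "GG s = 1 / ((-s) * sqrt (-s))"
definition GGd :: "real \<Rightarrow> real" where "GGd s = 3 / (2 * (-s)^2 * sqrt (-s))"
definition HH :: "real \<Rightarrow> real" where "HH s = 1 / (-s)"
definition HHd :: "real \<Rightarrow> real" where "HHd s = 1 / (-s)^2"
definition hi :: "real \<Rightarrow> real \<Rightarrow> real \<Rightarrow> real \<Rightarrow> real" where
  "hi c k w s = - (Af k w s * GG s) / (8 * c)"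
definition hr :: "real \<Rightarrow> real \<Rightarrow> real \<Rightarrow> real \<Rightarrow> real \<Rightarrow> real" where
  "hr c k w e1 s = - e1 * (Af k w s * HH s) / (8 * c)"
definition Di :: "real \<Rightarrow> real \<Rightarrow> real \<Rightarrow> real \<Rightarrow> real" where
  "Di c k w s = - (Ad k w s * GG s + Af k w s * GGd s) / (8 * c)"
definition Dr :: "real \<Rightarrow> real \<Rightarrow> real \<Rightarrow> real \<Rightarrow> real \<Rightarrow> real" where
  "Dr c k w e1 s = - e1 * (Ad k w s * HH s + Af k w s * HHd s) / (8 * c)"

lemma Af_deriv: assumes "s < 0" "w \<ge> 0"
  shows "(Af k w has_real_derivative Ad k w s) (at s)"
proof -
  have "1 - w * s > 0" using assms by (smt (verit) mult_nonneg_nonpos)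
  then show ?thesis unfolding Af_def Ad_def
    by (auto intro!: derivative_eq_intros simp: field_simps)
qed

lemma GG_deriv: assumes "s < 0" shows "(GG has_real_derivative GGd s) (at s)"
proof -
  have q: "sqrt (-s) > 0" using assms by simp
  have q2: "sqrt (-s) * sqrt (-s) = -s" using assms by simp
  have e: "sqrt (-s) * (sqrt (-s) * x) = - s * x" for x using q2 by (metis mult.assoc)
  show ?thesis unfolding GG_def GGd_def using assms q
    apply (auto intro!: derivative_eq_intros simp: field_simps power2_eq_square e)
    done
qed

lemma HH_deriv: assumes "s < 0" shows "(HH has_real_derivative HHd s) (at s)"
  unfolding HH_def HHd_def using assms
    by (auto intro!: derivative_eq_intros simp: field_simps power2_eq_square)

lemma hi_deriv: assumes "s < 0" "w \<ge> 0" "c > 0"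
  shows "(hi c k w has_real_derivative Di c k w s) (at s)"
  unfolding hi_def[abs_def] Di_def
  using assms by (auto intro!: derivative_eq_intros Af_deriv GG_deriv simp: field_simps)

lemma hr_deriv: assumes "s < 0" "w \<ge> 0" "c > 0"
  shows "(hr c k w e1 has_real_derivative Dr c k w e1 s) (at s)"
  unfolding hr_def[abs_def] Dr_def
  using assms by (auto intro!: derivative_eq_intros Af_deriv HH_deriv simp: field_simps)

definition PP :: "real \<Rightarrow> real \<Rightarrow> real \<Rightarrow> real \<Rightarrow> real" where
  "PP c k w \<sigma> = 2 * c * sqrt (- \<sigma>) / (1 - w * \<sigma>) powr k"

lemma u_pos: "(s::real) < 0 \<Longrightarrow> w \<ge> 0 \<Longrightarrow> 1 - w * s \<ge> 1"
  using mult_nonneg_nonpos[of w s] by linarith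

lemma Di_nonpos: assumes "s < 0" "w \<ge> 0" "k \<le> 1" "c > 0"
  shows "Di c k w s \<le> 0"
proof -
  have "(k - 1) * (1 - w * s) powr (k - 2) \<le> 0" using assms by (simp add: mult_nonpos_nonneg)
  then have "Ad k w s \<ge> 0" unfolding Ad_def using assms
    using mult_nonpos_nonneg by auto
  moreover have "GG s > 0" "GGd s > 0" "Af k w s > 0" using assms u_pos[OF assms(1,2)]
    unfolding GG_def GGd_def Af_def by (auto simp: mult_neg_pos)
  ultimately have "0 \<le> Ad k w s * GG s + Af k w s * GGd s" by simp
  then show ?thesis unfolding Di_def using assms
    by (simp add: divide_nonpos_pos)
qed

lemma Dr_nonpos: assumes "s < 0" "w \<ge> 0" "k \<le> 1" "c > 0" "e1 \<ge> 0"
  shows "Dr c k w e1 s \<le> 0"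
proof -
  have "(k - 1) * (1 - w * s) powr (k - 2) \<le> 0" using assms by (simp add: mult_nonpos_nonneg)
  then have "Ad k w s \<ge> 0" unfolding Ad_def using assms
    using mult_nonpos_nonneg by auto
  moreover have "HH s > 0" "HHd s > 0" "Af k w s > 0" using assms u_pos[OF assms(1,2)]
    unfolding HH_def HHd_def Af_def by auto
  ultimately show ?thesis unfolding Dr_def using assms
    by (simp add: divide_nonpos_pos add_nonneg_nonneg)
qed

lemma Af_le1: assumes "s < 0" "w \<ge> 0" "k \<le> 1" shows "0 < Af k w s" "Af k w s \<le> 1"
proof -
  have u: "1 \<le> 1 - w * s" using u_pos[OF assms(1,2)] by auto
  show "0 < Af k w s" unfolding Af_def using u by simp
  have "(1 - w * s) powr (k - 1) \<le> (1 - w * s) powr 0"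
    by (rule powr_mono) (use assms u in auto)
  then show "Af k w s \<le> 1" unfolding Af_def using u by simp
qed

lemma hi_bound: assumes "s < 0" "w \<ge> 0" "k \<le> 1" "c > 0"
  shows "\<bar>hi c k w s\<bar> \<le> GG s / (8 * c)"
proof -
  have "GG s > 0" unfolding GG_def using assms by (auto simp: mult_neg_pos)
  then show ?thesis unfolding hi_def using Af_le1[OF assms(1-3)] assms
    by (simp add: abs_mult mult_le_cancel_right1 divide_right_mono)
qed

lemma hr_bound: assumes "s < 0" "w \<ge> 0" "k \<le> 1" "c > 0" "e1 \<ge> 0" "e1^2 = w" "w * (-s) \<le> 1"
  shows "\<bar>hr c k w e1 s\<bar> \<le> GG s / (8 * c)"
proof -
  have "sqrt w = e1" using assms(5,6) real_sqrt_abs[of e1] by simp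
  then have "e1 * sqrt (-s) = sqrt (w * (-s))" using real_sqrt_mult[of w "-s"] by simp
  also have "\<dots> \<le> 1" using assms by simp
  finally have e: "e1 * sqrt (-s) \<le> 1" .
  have "e1 * HH s \<le> GG s" unfolding HH_def GG_def using assms e
    by (simp add: field_simps)
  moreover have "HH s > 0" unfolding HH_def using assms by auto
  ultimately have "e1 * (Af k w s * HH s) \<le> GG s" using Af_le1[OF assms(1-3)] assms
    by (smt (verit, best) mult.left_commute mult_left_le_one_le mult_nonneg_nonneg)
  then show ?thesis unfolding hr_def using Af_le1[OF assms(1-3)] assms \<open>HH s > 0\<close>
    by (simp add: abs_mult divide_right_mono)
qed

lemma hiP_aux: "(r::real) > 0 \<Longrightarrow> u > 0 \<Longrightarrow> U > 0 \<Longrightarrow> c > 0 \<Longrightarrow>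
  2 * c * r / U * (- (U / u * (1 / (r * r * r))) / (8 * c)) = - 1 / (4 * (r * r) * u)"
  by (simp add: field_simps)

lemma hrP_aux: "(r::real) > 0 \<Longrightarrow> u > 0 \<Longrightarrow> U > 0 \<Longrightarrow> c > 0 \<Longrightarrow>
  2 * c * r / U * (- e1 * (U / u * (1 / (r * r))) / (8 * c)) = - e1 / (4 * r * u)"
  by (simp add: field_simps)

lemma Af_eq: assumes "s < 0" "w \<ge> 0" shows "Af k w s = (1 - w * s) powr k / (1 - w * s)"
proof -
  have u: "1 \<le> 1 - w * s" using u_pos[OF assms] by auto
  show ?thesis unfolding Af_def using u by (simp add: powr_diff)
qed

lemma hiP: assumes "s < 0" "w \<ge> 0" "c > 0"
  shows "PP c k w s * hi c k w s = - 1 / (4 * (-s) * (1 - w * s))"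
proof -
  have u: "1 \<le> 1 - w * s" using u_pos[OF assms(1,2)] by auto
  have r: "sqrt (-s) > 0" using assms by auto
  have q2: "sqrt (-s) * sqrt (-s) = -s" using assms by simp
  have GG: "GG s = 1 / (sqrt (-s) * sqrt (-s) * sqrt (-s))" unfolding GG_def q2 ..
  show ?thesis unfolding PP_def hi_def Af_eq[OF assms(1,2)] GG
    using hiP_aux[OF r, of "1 - w * s" "(1 - w * s) powr k" c] u assms q2 by simp
qed

lemma hrP: assumes "s < 0" "w \<ge> 0" "c > 0"
  shows "PP c k w s * hr c k w e1 s = - e1 / (4 * sqrt (-s) * (1 - w * s))"
proof -
  have u: "1 \<le> 1 - w * s" using u_pos[OF assms(1,2)] by auto
  have r: "sqrt (-s) > 0" using assms by auto
  have q2: "sqrt (-s) * sqrt (-s) = -s" using assms by simp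
  have HH: "HH s = 1 / (sqrt (-s) * sqrt (-s))" unfolding HH_def q2 ..
  show ?thesis unfolding PP_def hr_def Af_eq[OF assms(1,2)] HH
    using hrP_aux[OF r, of "1 - w * s" "(1 - w * s) powr k" c e1] u assms by simp
qed



lemma PP_cont: assumes "z < 0" "w \<ge> 0" shows "continuous_on {a..z} (PP c k w)"
proof -
  have "\<forall>x\<in>{a..z}. 1 - w * x > 0"
  proof
    fix x assume "x \<in> {a..z}"
    then show "1 - w * x > 0" using assms u_pos[of x w] by auto
  qed
  then show ?thesis unfolding PP_def[abs_def]
    by (auto intro!: continuous_intros)
qed

lemma phase_deriv: assumes "a \<le> s" "s \<le> z" "z < 0" "w \<ge> 0"
  shows "((\<lambda>s. integral {s..z} (PP c k w)) has_real_derivative - PP c k w s) (at s within {a..z})"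
  by (rule integral_has_real_derivative'[OF PP_cont]) (use assms in auto)

definition hh :: "real \<Rightarrow> real \<Rightarrow> real \<Rightarrow> real \<Rightarrow> real \<Rightarrow> complex" where
  "hh c k w e1 s = of_real (hr c k w e1 s) + \<i> * of_real (hi c k w s)"
definition hdv :: "real \<Rightarrow> real \<Rightarrow> real \<Rightarrow> real \<Rightarrow> real \<Rightarrow> complex" where
  "hdv c k w e1 s = of_real (Dr c k w e1 s) + \<i> * of_real (Di c k w s)"

lemma hh_deriv: assumes "s < 0" "w \<ge> 0" "c > 0"
  shows "(hh c k w e1 has_vector_derivative hdv c k w e1 s) (at s)"
  unfolding hh_def[abs_def] hdv_def
  by (auto intro!: derivative_eq_intros hr_deriv hi_deriv assms)

lemma ident_aux: fixes r e1 :: real assumes "r > 0" "u = 1 + e1^2 * (r * r)"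
  shows "Complex (-1/(4*(r*r)*u)) (e1/(4*r*u)) * (4 * complex_of_real (-(r*r)) * (1 + \<i> * complex_of_real (e1 * r))) = 1"
  (is "?A * ?B = 1")
proof -
  have u: "u > 0" using assms by (simp add: add_pos_nonneg)
  have B: "Re ?B = -4*r*r" "Im ?B = -4*r*r*e1*r" by simp_all
  have "Re (?A * ?B) = (-1/(4*(r*r)*u)) * (-4*r*r) - (e1/(4*r*u)) * (-4*r*r*e1*r)"
    unfolding times_complex.sel(1) B by simp
  also have "\<dots> = (1 + e1^2 * (r*r)) / u" using u assms(1) by (simp add: field_simps power2_eq_square)
  also have "\<dots> = 1" using assms u by simp
  finally have 1: "Re (?A * ?B) = 1" .
  have "Im (?A * ?B) = (-1/(4*(r*r)*u)) * (-4*r*r*e1*r) + (e1/(4*r*u)) * (-4*r*r)"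
    unfolding times_complex.sel(2) B by simp
  also have "\<dots> = 0" using u assms(1) by (simp add: field_simps)
  finally have 2: "Im (?A * ?B) = 0" .
  show ?thesis using 1 2 by (simp add: complex_eq_iff)
qed

lemma ident: assumes "s < 0" "w \<ge> 0" "c > 0" "e1 \<ge> 0" "e1^2 = w"
  shows "(\<i> * complex_of_real (- PP c k w s)) * hh c k w e1 s
     = 1 / (4 * complex_of_real s * (1 + \<i> * complex_of_real (e1 * sqrt (-s))))"
proof -
  define r where "r = sqrt (-s)"
  have r: "r > 0" "r * r = -s" using assms unfolding r_def by auto
  have u: "1 - w * s = 1 + e1^2 * (r * r)" using r assms by simp
  have "(\<i> * complex_of_real (- PP c k w s)) * hh c k w e1 s
      = Complex (PP c k w s * hi c k w s) (- (PP c k w s * hr c k w e1 s))"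
    unfolding hh_def by (simp add: complex_eq_iff)
  also have "\<dots> = Complex (-1/(4*(r*r)*(1 - w * s))) (e1/(4*r*(1 - w * s)))"
    unfolding hiP[OF assms(1-3)] hrP[OF assms(1-3)] r_def[symmetric] r(2) by simp
  finally have L: "(\<i> * complex_of_real (- PP c k w s)) * hh c k w e1 s = \<dots>" .
  have s: "s = - (r * r)" using r by simp
  have "Complex (-1/(4*(r*r)*(1 - w * s))) (e1/(4*r*(1 - w * s))) *
     (4 * complex_of_real (-(r*r)) * (1 + \<i> * complex_of_real (e1 * r))) = 1"
    by (rule ident_aux[OF r(1) u])
  then have "(4 * complex_of_real (-(r*r)) * (1 + \<i> * complex_of_real (e1 * r))) *
     Complex (-1/(4*(r*r)*(1 - w * s))) (e1/(4*r*(1 - w * s))) = 1"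
    by (simp only: mult.commute)
  then have "inverse (4 * complex_of_real (-(r*r)) * (1 + \<i> * complex_of_real (e1 * r))) =
     Complex (-1/(4*(r*r)*(1 - w * s))) (e1/(4*r*(1 - w * s)))"
    by (rule inverse_unique)
  moreover have "1 / (4 * complex_of_real s * (1 + \<i> * complex_of_real (e1 * sqrt (-s))))
     = inverse (4 * complex_of_real (-(r*r)) * (1 + \<i> * complex_of_real (e1 * r)))"
    unfolding r_def[symmetric] by (subst (1) s) (simp only: divide_inverse mult_1)
  ultimately show ?thesis using L by simp
qed



definition EE :: "real \<Rightarrow> real \<Rightarrow> real \<Rightarrow> real \<Rightarrow> real \<Rightarrow> complex" where
  "EE c k w z s = exp (\<i> * complex_of_real (integral {s..z} (PP c k w)))"

definition FF :: "real \<Rightarrow> real \<Rightarrow> real \<Rightarrow> real \<Rightarrow> real \<Rightarrow> real \<Rightarrow> complex" where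
  "FF c k w e1 z s = EE c k w z s / (4 * complex_of_real s * (1 + \<i> * complex_of_real (e1 * sqrt (-s))))"

lemma GG_mono_aux: fixes p q :: real assumes "0 < q" "q \<le> p"
  shows "1 / (p * sqrt p) \<le> 1 / (q * sqrt q)"
proof -
  have "q * sqrt q \<le> p * sqrt p" using assms by (intro mult_mono real_sqrt_le_mono) auto
  moreover have "0 < q * sqrt q" using assms by simp
  ultimately show ?thesis by (intro divide_left_mono) (auto intro!: mult_pos_pos)
qed

lemma GG_mono: assumes "a \<le> b" "b < 0" shows "GG a \<le> GG b"
  unfolding GG_def using GG_mono_aux[of "-b" "-a"] assms by simp

lemma EE_cont: assumes "z < 0" "w \<ge> 0" "a \<le> b" "b \<le> z"
  shows "continuous_on {a..b} (EE c k w z)"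
proof -
  have "continuous_on {a..z} (\<lambda>s. integral {s..z} (PP c k w))"
    using phase_deriv[OF _ _ assms(1,2), of a] 
    by (intro continuous_on_vector_derivative)
      (auto simp: has_real_derivative_iff_has_vector_derivative[symmetric])
  then have "continuous_on {a..b} (\<lambda>s. integral {s..z} (PP c k w))"
    by (rule continuous_on_subset) (use assms in auto)
  then show ?thesis unfolding EE_def[abs_def]
    by (intro continuous_intros) auto
qed

lemma EE_deriv: assumes "z < 0" "w \<ge> 0" "a < x" "x < z"
  shows "(EE c k w z has_vector_derivative (\<i> * complex_of_real (- PP c k w x)) * EE c k w z x) (at x)"
proof -
  have "((\<lambda>s. integral {s..z} (PP c k w)) has_real_derivative - PP c k w x) (at x)"
    using phase_deriv[of a x z w c k] assms at_within_Icc_at[of a x z] by auto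
  then have d: "((\<lambda>s. \<i> * complex_of_real (integral {s..z} (PP c k w))) has_vector_derivative
      \<i> * complex_of_real (- PP c k w x)) (at x)"
    by (auto intro!: derivative_eq_intros)
  have "((exp \<circ> (\<lambda>s. \<i> * complex_of_real (integral {s..z} (PP c k w)))) has_vector_derivative
      (\<i> * complex_of_real (- PP c k w x)) * exp (\<i> * complex_of_real (integral {x..z} (PP c k w)))) (at x)"
    by (rule field_vector_diff_chain_at[OF d]) (rule DERIV_exp)
  then show ?thesis unfolding EE_def[abs_def] o_def .
qed

lemma hh_norm: assumes "s < 0" "w \<ge> 0" "k \<le> 1" "c > 0" "e1 \<ge> 0" "e1^2 = w" "w * (-s) \<le> 1"
  shows "norm (hh c k w e1 s) \<le> 2 * GG s / (8 * c)"
proof -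
  have "norm (hh c k w e1 s) \<le> \<bar>hr c k w e1 s\<bar> + \<bar>hi c k w s\<bar>"
    unfolding hh_def by (rule order.trans[OF norm_triangle_ineq]) (simp add: norm_mult)
  then show ?thesis using hr_bound[OF assms] hi_bound[OF assms(1-4)] by simp
qed

lemma core:
  assumes c: "c > 0" and k: "k \<le> 1" and w: "w \<ge> 0" and e1: "e1 \<ge> 0" "e1^2 = w"
    and ab: "a \<le> b" and bz: "b \<le> z" and z: "z < 0" and wa: "w * (-a) \<le> 1"
  shows "FF c k w e1 z integrable_on {a..b} \<and> norm (integral {a..b} (FF c k w e1 z)) \<le> GG b / c"
proof -
  have neg: "x < 0" if "x \<in> {a..b}" for x using that bz z by auto
  have wx: "w * (-x) \<le> 1" if "x \<in> {a..b}" for x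
  proof -
    have "w * (-x) \<le> w * (-a)" using that w by (intro mult_left_mono) auto
    then show ?thesis using wa by simp
  qed
  let ?E = "EE c k w z" and ?h = "hh c k w e1" and ?h' = "hdv c k w e1"
  let ?E' = "\<lambda>x. (\<i> * complex_of_real (- PP c k w x)) * EE c k w z x"
  have Ec: "continuous_on {a..b} ?E" by (rule EE_cont[OF z w ab bz])
  have hder: "(?h has_vector_derivative ?h' x) (at x)" if "x \<in> {a..b}" for x
    by (rule hh_deriv[OF neg[OF that] w c])
  have hc: "continuous_on {a..b} ?h"
    using hder by (intro continuous_on_vector_derivative) (auto intro: has_vector_derivative_at_within)
  have Adc: "continuous_on {a..b} (Ad k w)"
  proof -
    have "\<forall>x\<in>{a..b}. 1 - w * x \<noteq> 0" using neg u_pos[of _ w] w by force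
    then show ?thesis unfolding Ad_def[abs_def] by (intro continuous_intros) auto
  qed
  have Afc: "continuous_on {a..b} (Af k w)"
    using Af_deriv[OF neg w] by (intro continuous_on_vector_derivative)
      (auto simp: has_real_derivative_iff_has_vector_derivative[symmetric] intro: has_field_derivative_at_within)
  have Gc: "continuous_on {a..b} GG"
    using GG_deriv[OF neg] by (intro continuous_on_vector_derivative)
      (auto simp: has_real_derivative_iff_has_vector_derivative[symmetric] intro: has_field_derivative_at_within)
  have Hc: "continuous_on {a..b} HH"
    using HH_deriv[OF neg] by (intro continuous_on_vector_derivative)
      (auto simp: has_real_derivative_iff_has_vector_derivative[symmetric] intro: has_field_derivative_at_within)
  have Gdc: "continuous_on {a..b} GGd"
    using neg unfolding GGd_def[abs_def] by (intro continuous_intros) force+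
  have Hdc: "continuous_on {a..b} HHd"
    using neg unfolding HHd_def[abs_def] by (intro continuous_intros) force+
  have Dic: "continuous_on {a..b} (Di c k w)"
    unfolding Di_def[abs_def] using Adc Afc Gc Gdc c by (intro continuous_intros) auto
  have Drc: "continuous_on {a..b} (Dr c k w e1)"
    unfolding Dr_def[abs_def] using Adc Afc Hc Hdc c by (intro continuous_intros) auto
  have hdc: "continuous_on {a..b} ?h'"
    unfolding hdv_def[abs_def] using Dic Drc by (intro continuous_intros) auto
  have Eh'int: "(\<lambda>x. ?E x * ?h' x) integrable_on {a..b}"
    by (rule integrable_continuous_real) (intro continuous_intros Ec hdc)
  define Y where "Y = integral {a..b} (\<lambda>x. ?E x * ?h' x)"
  define y where "y = ?E b * ?h b - ?E a * ?h a - Y"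
  have "((\<lambda>x. ?E' x * ?h x) has_integral y) {a..b}"
  proof (rule integration_by_parts_interior[OF bounded_bilinear_mult ab Ec hc])
    fix x assume x: "x \<in> {a<..<b}"
    show "(?E has_vector_derivative ?E' x) (at x)"
      by (rule EE_deriv[OF z w, of a]) (use x bz in auto)
    show "(?h has_vector_derivative ?h' x) (at x)" using x by (intro hder) auto
  next
    show "((\<lambda>x. ?E x * ?h' x) has_integral ?E b * ?h b - ?E a * ?h a - y) {a..b}"
      unfolding y_def Y_def using integrable_integral[OF Eh'int] by simp
  qed
  moreover have "?E' x * ?h x = FF c k w e1 z x" if "x \<in> {a..b}" for x
  proof -
    have "?E' x * ?h x = ?E x * ((\<i> * complex_of_real (- PP c k w x)) * ?h x)" by (simp add: ac_simps)
    also have "\<dots> = FF c k w e1 z x" unfolding ident[OF neg[OF that] w c e1] FF_def by simp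
    finally show ?thesis .
  qed
  ultimately have Fint: "(FF c k w e1 z has_integral y) {a..b}"
    using has_integral_cong by (metis (no_types, lifting))
  have Ga: "GG a \<le> GG b" using GG_mono ab bz z by auto
  have a: "a \<in> {a..b}" and b: "b \<in> {a..b}" using ab by auto
  have nh: "norm (?E x * ?h x) \<le> 2 * GG b / (8 * c)" if "x \<in> {a..b}" for x
  proof -
    have "norm (?E x * ?h x) = norm (?h x)" unfolding EE_def by (simp add: norm_mult)
    also have "\<dots> \<le> 2 * GG x / (8 * c)" by (rule hh_norm[OF neg[OF that] w k c e1 wx[OF that]])
    also have "\<dots> \<le> 2 * GG b / (8 * c)" using GG_mono[of x b] that bz z c by (auto simp: divide_right_mono)
    finally show ?thesis .
  qed
  have Dint: "((\<lambda>x. - Dr c k w e1 x - Di c k w x) has_integral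
      ((- hr c k w e1 b - hi c k w b) - (- hr c k w e1 a - hi c k w a))) {a..b}"
  proof (rule fundamental_theorem_of_calculus[OF ab])
    fix x assume x: "x \<in> {a..b}"
    have "((\<lambda>x. - hr c k w e1 x - hi c k w x) has_real_derivative - Dr c k w e1 x - Di c k w x) (at x)"
      using hr_deriv[OF neg[OF x] w c, of k e1] hi_deriv[OF neg[OF x] w c, of k]
      by (auto intro!: derivative_eq_intros)
    then show "((\<lambda>x. - hr c k w e1 x - hi c k w x) has_vector_derivative - Dr c k w e1 x - Di c k w x) (at x within {a..b})"
      by (simp add: has_real_derivative_iff_has_vector_derivative[symmetric] has_field_derivative_at_within)
  qed
  have "norm Y \<le> integral {a..b} (\<lambda>x. - Dr c k w e1 x - Di c k w x)"
    unfolding Y_def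
  proof (rule integral_norm_bound_integral[OF Eh'int])
    show "(\<lambda>x. - Dr c k w e1 x - Di c k w x) integrable_on {a..b}" using Dint by blast
    fix x assume x: "x \<in> {a..b}"
    have "norm (?E x * ?h' x) = norm (?h' x)" unfolding EE_def by (simp add: norm_mult)
    also have "\<dots> \<le> \<bar>Dr c k w e1 x\<bar> + \<bar>Di c k w x\<bar>"
      unfolding hdv_def by (rule order.trans[OF norm_triangle_ineq]) (simp add: norm_mult)
    also have "\<dots> = - Dr c k w e1 x - Di c k w x"
      using Dr_nonpos[OF neg[OF x] w k c e1(1)] Di_nonpos[OF neg[OF x] w k c] by simp
    finally show "norm (?E x * ?h' x) \<le> - Dr c k w e1 x - Di c k w x" .
  qed
  also have "\<dots> = (- hr c k w e1 b - hi c k w b) - (- hr c k w e1 a - hi c k w a)"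
    using Dint by (rule integral_unique)
  also have "\<dots> \<le> \<bar>hr c k w e1 b\<bar> + \<bar>hi c k w b\<bar> + \<bar>hr c k w e1 a\<bar> + \<bar>hi c k w a\<bar>" by linarith
  also have "\<dots> \<le> GG b / (8 * c) + GG b / (8 * c) + GG a / (8 * c) + GG a / (8 * c)"
    using hr_bound[OF neg[OF b] w k c e1 wx[OF b]] hi_bound[OF neg[OF b] w k c]
      hr_bound[OF neg[OF a] w k c e1 wx[OF a]] hi_bound[OF neg[OF a] w k c] by linarith
  also have "\<dots> \<le> 4 * GG b / (8 * c)" using Ga c by (simp add: divide_right_mono field_simps)
  finally have nY: "norm Y \<le> 4 * GG b / (8 * c)" .
  have "norm y \<le> norm (?E b * ?h b) + norm (?E a * ?h a) + norm Y"
    unfolding y_def by (smt (verit) norm_triangle_ineq4)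
  also have "\<dots> \<le> 2 * GG b / (8 * c) + 2 * GG b / (8 * c) + 4 * GG b / (8 * c)"
    using nh[OF a] nh[OF b] nY by linarith
  also have "\<dots> = GG b / c" using c by (simp add: field_simps)
  finally show ?thesis using Fint by (auto simp: integral_unique)
qed



lemma improper:
  fixes f :: "real \<Rightarrow> 'a::banach" and g :: "real \<Rightarrow> real"
  assumes int: "\<And>a. a \<le> b \<Longrightarrow> f integrable_on {a..b}"
    and bnd: "\<And>a x. a \<le> x \<Longrightarrow> x \<le> b \<Longrightarrow> norm (integral {a..x} f) \<le> g x"
    and g: "\<And>e. e > 0 \<Longrightarrow> \<exists>B. \<forall>x\<le>B. g x < e"
  shows "f integrable_on {..b} \<and> norm (integral {..b} f) \<le> g b"
proof -
  define I where "I a = integral {a..b} f" for a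
  have diff: "norm (I a - I a') \<le> g a'" if "a \<le> a'" "a' \<le> b" for a a'
  proof -
    have "integral {a..a'} f + integral {a'..b} f = integral {a..b} f"
      using Henstock_Kurzweil_Integration.integral_combine[where a=a and c=a' and b=b and f=f] that int[of a] by auto
    then have "I a - I a' = integral {a..a'} f" unfolding I_def by (simp add: algebra_simps)
    then show ?thesis using bnd[of a a'] that by simp
  qed
  have diff2: "norm (I x - I y) < e" if "x \<le> B" "y \<le> B" "x \<le> b" "y \<le> b" "\<forall>x\<le>B. g x < e" for x y B e
  proof (cases "x \<le> y")
    case True
    have "norm (I x - I y) \<le> g y" using diff[of x y] True that(4) by blast
    also have "g y < e" using that(2,5) by blast
    finally show ?thesis .
  next
    case False
    have "norm (I y - I x) \<le> g x" using diff[of y x] False that(3) by simp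
    also have "g x < e" using that(1,5) by blast
    finally show ?thesis by (simp add: norm_minus_commute)
  qed
  define X where "X n = I (min b (- real n))" for n
  have "Cauchy X"
  proof (rule metric_CauchyI)
    fix e :: real assume e: "e > 0"
    obtain B where B: "\<forall>x\<le>B. g x < e" using g[OF e] by blast
    obtain N :: nat where N: "- real N \<le> B" using real_arch_simple[of "-B"] by (metis neg_le_iff_le minus_minus)
    show "\<exists>M. \<forall>m\<ge>M. \<forall>n\<ge>M. dist (X m) (X n) < e"
    proof (intro exI allI impI)
      fix m n assume "N \<le> m" "N \<le> n"
      then have "min b (- real m) \<le> B" "min b (- real n) \<le> B" using N by auto
      then show "dist (X m) (X n) < e" unfolding X_def dist_norm
        by (intro diff2[OF _ _ _ _ B]) auto
    qed
  qed
  then obtain L where L: "X \<longlonglongrightarrow> L" using Cauchy_convergent_iff convergent_def by blast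
  have lim: "\<exists>B. \<forall>a\<le>B. norm (I a - L) < e" if e: "e > 0" for e
  proof -
    obtain B where B: "\<forall>x\<le>B. g x < e/2" using g[of "e/2"] e by auto
    obtain N where N: "\<forall>n\<ge>N. norm (X n - L) < e/2"
      using L e unfolding LIMSEQ_def dist_norm by (meson half_gt_zero)
    show ?thesis
    proof (intro exI allI impI)
      fix a assume a: "a \<le> min B b"
      define n where "n = max N (nat \<lceil>- a\<rceil>)"
      have n: "- real n \<le> a" unfolding n_def by linarith
      have "min b (- real n) = - real n" using n a by linarith
      then have Xn: "X n = I (- real n)" unfolding X_def by simp
      have aB: "a \<le> B" "a \<le> b" using a by auto
      have "norm (I (- real n) - I a) \<le> g a" using diff[of "- real n" a] n aB(2) by blast
      also have "g a < e/2" using B aB(1) by blast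
      finally have 1: "norm (I a - X n) < e/2" unfolding Xn by (simp add: norm_minus_commute)
      have 2: "norm (X n - L) < e/2" using N n_def by simp
      have "norm (I a - L) \<le> norm (I a - X n) + norm (X n - L)"
        using norm_triangle_ineq[of "I a - X n" "X n - L"] by simp
      then have "norm (I a - L) < e/2 + e/2" using 1 2 by linarith
      then show "norm (I a - L) < e" by simp
    qed
  qed
  have hasint: "(f has_integral L) {..b}"
    unfolding has_integral_alt'
  proof (intro conjI allI impI)
    fix a' b' :: real
    have emp: "f integrable_on {}" by (metis has_integral_empty integrable_on_def)
    have "f integrable_on ({..b} \<inter> cbox a' b')"
    proof (cases "a' \<le> b")
      case True
      have "{..b} \<inter> cbox a' b' = {a'..min b b'}" by auto
      then show ?thesis using int[OF True] emp by (auto intro: integrable_on_subinterval)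
    next
      case False
      then have "{..b} \<inter> cbox a' b' = {}" by auto
      then show ?thesis using emp by simp
    qed
    then show "(\<lambda>x. if x \<in> {..b} then f x else 0) integrable_on cbox a' b'"
      using integrable_restrict_Int[where S="{..b}" and f=f and T="cbox a' b'"] by blast
  next
    fix e :: real assume e: "e > 0"
    obtain B1 where B1: "\<forall>a\<le>B1. norm (I a - L) < e" using lim[OF e] by blast
    define B where "B = 2 * (\<bar>B1\<bar> + \<bar>b\<bar> + 1)"
    show "\<exists>B>0. \<forall>a b'. ball 0 B \<subseteq> cbox a b' \<longrightarrow>
          norm (integral (cbox a b') (\<lambda>x. if x \<in> {..b} then f x else 0) - L) < e"
    proof (intro exI conjI allI impI)
      show "B > 0" unfolding B_def by simp
      fix a' b' :: real assume sub: "ball 0 B \<subseteq> cbox a' b'"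
      have "- B/2 \<in> ball (0::real) B" "B/2 \<in> ball (0::real) B" using \<open>B > 0\<close> by auto
      then have "- B/2 \<in> cbox a' b'" "B/2 \<in> cbox a' b'" using sub by blast+
      then have ab: "a' \<le> - B/2" "B/2 \<le> b'" by auto
      then have a'B1: "a' \<le> B1" "a' \<le> b" "b \<le> b'" unfolding B_def by auto
      have "integral (cbox a' b') (\<lambda>x. if x \<in> {..b} then f x else 0) = integral ({..b} \<inter> cbox a' b') f"
        by (rule integral_restrict_Int)
      also have "{..b} \<inter> cbox a' b' = {a'..b}" using a'B1 by auto
      finally show "norm (integral (cbox a' b') (\<lambda>x. if x \<in> {..b} then f x else 0) - L) < e"
        using B1 a'B1 unfolding I_def by simp
    qed
  qed
  have "norm L \<le> g b"
  proof (rule tendsto_le[OF _ tendsto_const tendsto_norm])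
    show "((\<lambda>a. I a) \<longlongrightarrow> L) at_bot"
      unfolding tendsto_iff dist_norm eventually_at_bot_linorder using lim by blast
    show "\<forall>\<^sub>F a in at_bot. norm (I a) \<le> g b"
      unfolding eventually_at_bot_linorder I_def using bnd[of _ b] by auto
  qed simp
  then show ?thesis using hasint by (auto simp: integral_unique)
qed


lemma vec2_norm: fixes x :: "'a::real_normed_vector^2"
  shows "norm x \<le> norm (x$1) + norm (x$2)"
proof -
  have "norm x = L2_set (\<lambda>i. norm (x$i)) UNIV" unfolding norm_vec_def ..
  also have "\<dots> \<le> sum (\<lambda>i. norm (x$i)) UNIV" by (rule L2_set_le_sum) simp
  also have "\<dots> = norm (x$1) + norm (x$2)" unfolding UNIV_2 by simp
  finally show ?thesis .
qed

lemma GG_tends: assumes "c > 0" shows "\<And>e. e > 0 \<Longrightarrow> \<exists>B. \<forall>x\<le>B. GG x / c < e"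
proof -
  fix e :: real assume e: "e > 0"
  show "\<exists>B. \<forall>x\<le>B. GG x / c < e"
  proof (intro exI allI impI)
    fix x assume x: "x \<le> min (-1) (- 2 / (c * e))"
    have x1: "1 \<le> -x" using x by auto
    have "2 / (c * e) \<le> -x" using x by auto
    have s1: "1 \<le> sqrt (-x)" using x1 by simp
    have p: "(-x) \<le> (-x) * sqrt (-x)" using x1 s1 by (simp add: mult_le_cancel_left1)
    have q: "0 < ((-x) * sqrt (-x)) * (-x)" using x1 s1 by (intro mult_pos_pos) auto
    have "GG x \<le> 1 / (-x)" unfolding GG_def
      by (rule divide_left_mono[OF p _ q]) simp
    also have "\<dots> \<le> c * e / 2" using \<open>2 / (c * e) \<le> -x\<close> assms e x1
      by (simp add: field_simps)
    also have "\<dots> < c * e" using assms e by simp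
    finally show "GG x / c < e" using assms by (simp add: field_simps)
  qed
qed

lemma f12_FF: "f12 \<beta> \<gamma> \<epsilon> z = FF (c0 \<beta> \<gamma>) (kappa \<gamma>) (\<epsilon> powr (2/3)) (\<epsilon> powr (1/3)) z"
  unfolding f12_def[abs_def] FF_def[abs_def] EE_def phase_def PP_def[abs_def] by simp

lemma f21_FF: "f21 \<beta> \<gamma> \<epsilon> z = (\<lambda>s. cnj (FF (c0 \<beta> \<gamma>) (kappa \<gamma>) (\<epsilon> powr (2/3)) (\<epsilon> powr (1/3)) z s))"
  unfolding f21_def[abs_def] FF_def[abs_def] EE_def phase_def PP_def[abs_def]
  by (simp add: exp_cnj)

lemma main_bound:
  fixes \<beta> \<gamma> \<epsilon> z :: real
  assumes "\<beta> > 0" and "1/2 < \<gamma>" and "\<gamma> < 1"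
    and "\<epsilon> \<ge> 0" "z \<le> -1" "\<epsilon> \<noteq> 0 \<longrightarrow> - Z2 \<epsilon> \<le> z"
  shows "f12 \<beta> \<gamma> \<epsilon> z integrable_on dom_int \<epsilon> z \<and>
     norm (integral (dom_int \<epsilon> z) (f12 \<beta> \<gamma> \<epsilon> z)) \<le> GG z / c0 \<beta> \<gamma>"
proof -
  define c where "c = c0 \<beta> \<gamma>"
  define k where "k = kappa \<gamma>"
  define w where "w = \<epsilon> powr (2/3)"
  define e1 where "e1 = \<epsilon> powr (1/3)"
  have c: "c > 0" unfolding c_def c0_def using assms by simp
  have k: "k \<le> 1" unfolding k_def kappa_def using assms by (simp add: field_simps)
  have w: "w \<ge> 0" and e1: "e1 \<ge> 0" unfolding w_def e1_def by auto
  have e1w: "e1^2 = w" unfolding w_def e1_def power2_eq_square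
    using assms(4) by (cases "\<epsilon> = 0") (simp_all flip: powr_add)
  have z: "z < 0" using assms by simp
  have f: "f12 \<beta> \<gamma> \<epsilon> z = FF c k w e1 z" unfolding f12_FF c_def k_def w_def e1_def ..
  show ?thesis
  proof (cases "\<epsilon> = 0")
    case True
    then have w0: "w = 0" unfolding w_def by simp
    have dom: "dom_int \<epsilon> z = {..z}" unfolding dom_int_def using True by simp
    have "FF c k w e1 z integrable_on {..z} \<and> norm (integral {..z} (FF c k w e1 z)) \<le> GG z / c"
    proof (rule improper)
      fix a assume "a \<le> z"
      then show "FF c k w e1 z integrable_on {a..z}"
        using core[OF c k w e1 e1w \<open>a \<le> z\<close> order.refl z] w0 by simp
    next
      fix a x assume "a \<le> x" "x \<le> z"
      then show "norm (integral {a..x} (FF c k w e1 z)) \<le> GG x / c"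
        using core[OF c k w e1 e1w \<open>a \<le> x\<close> \<open>x \<le> z\<close> z] w0 by simp
    next
      fix e :: real assume "e > 0"
      then show "\<exists>B. \<forall>x\<le>B. GG x / c < e" by (rule GG_tends[OF c])
    qed
    then show ?thesis unfolding f dom c_def .
  next
    case False
    then have eps: "\<epsilon> > 0" using assms by simp
    have dom: "dom_int \<epsilon> z = {- Z2 \<epsilon>..z}" unfolding dom_int_def using False by simp
    have wpos: "w > 0" unfolding w_def using eps by simp
    have "w * (- (- Z2 \<epsilon>)) = 1/5" unfolding Z2_def w_def[symmetric] using wpos by simp
    then have wa: "w * (- (- Z2 \<epsilon>)) \<le> 1" by simp
    have "- Z2 \<epsilon> \<le> z" using assms False by simp
    from core[OF c k w e1 e1w this order.refl z wa]
    show ?thesis unfolding f dom c_def .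
  qed
qed

theorem lemma8p6:
  fixes \<beta> \<gamma> \<eta> :: real
  assumes "\<beta> > 0" and "1/2 < \<gamma>" and "\<gamma> < 1" and "\<eta> > 0"
  shows "\<exists>cIV > 0. \<forall>\<epsilon> z.
           (\<epsilon> = 0 \<or> (0 < \<epsilon> \<and> \<epsilon> < \<eta>)) \<and> z \<le> -1 \<and> (\<epsilon> \<noteq> 0 \<longrightarrow> - Z2 \<epsilon> \<le> z) \<longrightarrow>
             f12 \<beta> \<gamma> \<epsilon> z integrable_on dom_int \<epsilon> z \<and>
             f21 \<beta> \<gamma> \<epsilon> z integrable_on dom_int \<epsilon> z \<and>
             norm (That \<beta> \<gamma> \<epsilon> z) < cIV / \<bar>z\<bar> powr (3/2)"
proof -
  define c where "c = c0 \<beta> \<gamma>"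
  have c: "c > 0" unfolding c_def c0_def using assms by simp
  show ?thesis
  proof (intro exI[of _ "4 / c"] conjI allI impI)
    show "4 / c > 0" using c by simp
    fix \<epsilon> z :: real
    assume H: "(\<epsilon> = 0 \<or> (0 < \<epsilon> \<and> \<epsilon> < \<eta>)) \<and> z \<le> -1 \<and> (\<epsilon> \<noteq> 0 \<longrightarrow> - Z2 \<epsilon> \<le> z)"
    then have e0: "\<epsilon> \<ge> 0" and z: "z \<le> -1" and zz: "\<epsilon> \<noteq> 0 \<longrightarrow> - Z2 \<epsilon> \<le> z" by auto
    note mb = main_bound[OF assms(1-3) e0 z zz, folded c_def]
    show i12: "f12 \<beta> \<gamma> \<epsilon> z integrable_on dom_int \<epsilon> z" using mb by blast
    have f21: "f21 \<beta> \<gamma> \<epsilon> z = (\<lambda>s. cnj (f12 \<beta> \<gamma> \<epsilon> z s))" unfolding f21_FF f12_FF ..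
    show "f21 \<beta> \<gamma> \<epsilon> z integrable_on dom_int \<epsilon> z"
      unfolding f21 integrable_on_cnj_iff by (rule i12)
    have n12: "norm (T12 \<beta> \<gamma> \<epsilon> z) \<le> GG z / c" unfolding T12_def using mb by blast
    have n21: "norm (T21 \<beta> \<gamma> \<epsilon> z) \<le> GG z / c"
      unfolding T21_def f21 integral_cnj[symmetric] complex_mod_cnj using mb by blast
    have "norm (That \<beta> \<gamma> \<epsilon> z) \<le> norm (vector [0, T12 \<beta> \<gamma> \<epsilon> z] :: complex^2) + norm (vector [T21 \<beta> \<gamma> \<epsilon> z, 0] :: complex^2)"
      unfolding That_def using vec2_norm[of "vector [vector [0, T12 \<beta> \<gamma> \<epsilon> z], vector [T21 \<beta> \<gamma> \<epsilon> z, 0]] :: complex^2^2"] by simp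
    also have "\<dots> \<le> (norm (0::complex) + norm (T12 \<beta> \<gamma> \<epsilon> z)) + (norm (T21 \<beta> \<gamma> \<epsilon> z) + norm (0::complex))"
      using vec2_norm[of "vector [0, T12 \<beta> \<gamma> \<epsilon> z] :: complex^2"] vec2_norm[of "vector [T21 \<beta> \<gamma> \<epsilon> z, 0] :: complex^2"]
      by (intro add_mono) simp_all
    also have "\<dots> \<le> 2 * (GG z / c)" using n12 n21 by simp
    also have "\<dots> < 4 / c * GG z"
    proof -
      have "GG z > 0" unfolding GG_def using z by (simp add: mult_neg_pos)
      then show ?thesis using c by (simp add: field_simps)
    qed
    also have "GG z = 1 / \<bar>z\<bar> powr (3/2)"
    proof -
      have "\<bar>z\<bar> powr (3/2) = \<bar>z\<bar> powr (1 + 1/2)" by simp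
      also have "\<dots> = \<bar>z\<bar> powr 1 * \<bar>z\<bar> powr (1/2)" by (rule powr_add)
      also have "\<dots> = (-z) * sqrt (-z)" using z by (simp add: powr_half_sqrt)
      finally show ?thesis unfolding GG_def by simp
    qed
    finally show "norm (That \<beta> \<gamma> \<epsilon> z) < 4 / c / \<bar>z\<bar> powr (3/2)" by simp
  qed
qed

end
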